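(* Let $X$ and $Y$ be objects of an $R$-linear triangulated category $\mathsf{T}$ with $\operatorname{Hom}^*_{\mathsf{T}}(X,Y)$ in $\mathsf{art}^{\mathsf{fl}}(R)$, and let $z\in R^d$. If for all $n\ll0$ there are short exact sequences $$0\to\operatorname{Hom}_{\mathsf{T}}(X,\Sigma^n(Y/\!\!/z))\to\operatorname{Hom}_{\mathsf{T}}(X,\Sigma^{n+1}Y)\to\operatorname{Hom}_{\mathsf{T}}(X,\Sigma^{n+d+1}Y)\to0$$ (of $R^0$-modules), then $h(X,Y/\!\!/z)(n)=h(X,Y)(n+d+1)-h(X,Y)(n+1)$ for all $n\ll0$, and for every $s\ge1$ one has $\Delta^{-s+1}h(X,Y/\!\!/z)(n)=-\Delta^{-s}h(X,Y)(n)$ for all $n\ll0$.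
   Context: $R=\bigoplus_{n\ge 0}R^n$ is a graded-commutative Noetherian ring generated over $R^0$ by $R^d$, $d\ge2$ even (standing assumption). $\mathsf{T}$ is a triangulated category with suspension $\Sigma$ that is $R$-linear: a graded ring homomorphism $\phi$ from $R$ to the graded center of $\mathsf{T}$ (degree-$n$ elements: natural transformations $\eta:\mathrm{id}\to\Sigma^n$ with $\eta\Sigma=(-1)^n\Sigma\eta$), giving $\phi_Y:R\to\operatorname{Hom}^*_{\mathsf{T}}(Y,Y)$ and making $\operatorname{Hom}^*_{\mathsf{T}}(X,Y)=\bigoplus_n\operatorname{Hom}_{\mathsf{T}}(X,\Sigma^nY)$ a graded $R$-module. $\lambda^n(X,Y)=\ell_{R^0}\operatorname{Hom}_{\mathsf{T}}(X,\Sigma^nY)$. $\mathsf{art}^{\mathsf{fl}}(R)$: $\bigoplus_{n\le n_0}\operatorname{Hom}_{\mathsf{T}}(X,\Sigma^nY)$ is Artinian over $R$ for some $n_0$ and all $\lambda^n(X,Y)<\infty$. $Y/\!\!/z$ is defined by a distinguished triangle $Y\xrightarrow{\phi_Y(z)}\Sigma^dY\to Y/\!\!/z\to\Sigma Y$. $h(X,Y)(n)=\sum_{i=0}^{d-1}(-1)^{n+i}\lambda^{n+i}(X,Y)$. Negative difference operator: $\Delta^{-1}f(n)=f(n+1)-f(n+d+1)$, $\Delta^0f=f$, $\Delta^{-s}f=\Delta^{-1}(\Delta^{-s+1}f)$ for $s\ge1$. *)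

theory Defs
  imports "HOL-Algebra.Module" "HOL-Library.Extended_Nat"
begin

definition module_linear ::
  "('r, 'c) ring_scheme \<Rightarrow> ('r, 'a) module \<Rightarrow> ('r, 'b) module \<Rightarrow> ('a \<Rightarrow> 'b) \<Rightarrow> bool" where
  "module_linear R M N f \<longleftrightarrow>
     (\<forall>x\<in>carrier M. f x \<in> carrier N) \<and>
     (\<forall>x\<in>carrier M. \<forall>y\<in>carrier M. f (x \<oplus>\<^bsub>M\<^esub> y) = f x \<oplus>\<^bsub>N\<^esub> f y) \<and>
     (\<forall>a\<in>carrier R. \<forall>x\<in>carrier M. f (a \<odot>\<^bsub>M\<^esub> x) = a \<odot>\<^bsub>N\<^esub> f x)"

definition short_exact ::
  "('r, 'c) ring_scheme \<Rightarrow> ('r, 'a) module \<Rightarrow> ('r, 'b) module \<Rightarrow> ('r, 'e) module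
     \<Rightarrow> ('a \<Rightarrow> 'b) \<Rightarrow> ('b \<Rightarrow> 'e) \<Rightarrow> bool" where
  "short_exact R A B C f g \<longleftrightarrow>
     module_linear R A B f \<and> module_linear R B C g \<and>
     inj_on f (carrier A) \<and> g ` carrier B = carrier C \<and>
     f ` carrier A = {y \<in> carrier B. g y = \<zero>\<^bsub>C\<^esub>}"

definition mod_length :: "('r, 'c) ring_scheme \<Rightarrow> ('r, 'a) module \<Rightarrow> enat" where
  "mod_length R M = Sup {enat k | k. \<exists>C :: 'a set list. length C = Suc k \<and>
      (\<forall>i < Suc k. submodule (C ! i) R M) \<and> (\<forall>i < k. C ! i \<subset> C ! Suc i)}"

text \<open>lambda^n(X,Y) = length over R0 of Hom(X, Sigma^n Y).  Hom is the Hom-module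
  functor of the category, Sig n the n-th power of the suspension.\<close>
definition lam ::
  "('r, 'c) ring_scheme \<Rightarrow> ('o \<Rightarrow> 'o \<Rightarrow> ('r, 'm) module) \<Rightarrow> (int \<Rightarrow> 'o \<Rightarrow> 'o)
     \<Rightarrow> int \<Rightarrow> 'o \<Rightarrow> 'o \<Rightarrow> enat" where
  "lam R Hom Sig n X Y = mod_length R (Hom X (Sig n Y))"

definition hfun ::
  "nat \<Rightarrow> ('r, 'c) ring_scheme \<Rightarrow> ('o \<Rightarrow> 'o \<Rightarrow> ('r, 'm) module) \<Rightarrow> (int \<Rightarrow> 'o \<Rightarrow> 'o)
     \<Rightarrow> 'o \<Rightarrow> 'o \<Rightarrow> int \<Rightarrow> int" where
  "hfun d R Hom Sig X Y n =
     (\<Sum>i<d. (if even (n + int i) then 1 else -1) * int (the_enat (lam R Hom Sig (n + int i) X Y)))"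

fun delta_neg :: "nat \<Rightarrow> nat \<Rightarrow> (int \<Rightarrow> int) \<Rightarrow> int \<Rightarrow> int" where
  "delta_neg d 0 f = f"
| "delta_neg d (Suc s) f = (\<lambda>n. delta_neg d s f (n + 1) - delta_neg d s f (n + int d + 1))"

end

theory Submission imports Defs begin

lemma lin_zero:
  assumes A: "Module.module R A" and B: "Module.module R B" and f: "module_linear R A B f"
  shows "f \<zero>\<^bsub>A\<^esub> = \<zero>\<^bsub>B\<^esub>"
proof -
  interpret A: Module.module R A by fact
  interpret B: Module.module R B by fact
  have z: "\<zero>\<^bsub>A\<^esub> \<in> carrier A" by simp
  have c: "f \<zero>\<^bsub>A\<^esub> \<in> carrier B" using f z unfolding module_linear_def by blast
  have "f \<zero>\<^bsub>A\<^esub> = f \<zero>\<^bsub>A\<^esub> \<oplus>\<^bsub>B\<^esub> f \<zero>\<^bsub>A\<^esub>"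
    using f z unfolding module_linear_def by (metis A.l_zero)
  then show ?thesis using c by (metis B.l_zero B.r_zero B.zero_closed B.add.right_cancel)
qed

lemma lin_neg:
  assumes A: "Module.module R A" and B: "Module.module R B" and f: "module_linear R A B f" and x: "x \<in> carrier A"
  shows "f (\<ominus>\<^bsub>A\<^esub> x) = \<ominus>\<^bsub>B\<^esub> f x"
proof -
  interpret A: Module.module R A by fact
  interpret B: Module.module R B by fact
  have c: "\<And>y. y \<in> carrier A \<Longrightarrow> f y \<in> carrier B" using f unfolding module_linear_def by blast
  have "f x \<oplus>\<^bsub>B\<^esub> f (\<ominus>\<^bsub>A\<^esub> x) = \<zero>\<^bsub>B\<^esub>"
    using f x lin_zero[OF A B f] unfolding module_linear_def by (metis A.a_inv_closed A.r_neg)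
  then show ?thesis using c x by (metis A.a_inv_closed B.minus_equality B.add.m_comm)
qed

lemma sub_zero:
  assumes A: "Module.module R A" and N: "submodule N R A"
  shows "\<zero>\<^bsub>A\<^esub> \<in> N"
proof -
  interpret A: Module.module R A by fact
  from A.submoduleE(2)[OF N] obtain a where a: "a \<in> N" by blast
  have "a \<oplus>\<^bsub>A\<^esub> \<ominus>\<^bsub>A\<^esub> a \<in> N" using A.submoduleE(3,5)[OF N] a by blast
  moreover have "a \<in> carrier A" using A.submoduleE(1)[OF N] a by blast
  ultimately show ?thesis by (simp add: A.r_neg)
qed

lemma img_sub:
  assumes A: "Module.module R A" and B: "Module.module R B" and f: "module_linear R A B f"
    and N: "submodule N R A"
  shows "submodule (f ` N) R B"
proof -
  interpret A: Module.module R A by fact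
  interpret B: Module.module R B by fact
  have sN: "N \<subseteq> carrier A" using A.submoduleE(1)[OF N] .
  note fl = f[unfolded module_linear_def]
  show ?thesis
  proof (rule B.submoduleI)
    show "f ` N \<subseteq> carrier B" using sN fl by blast
    show "\<zero>\<^bsub>B\<^esub> \<in> f ` N" using sub_zero[OF A N] lin_zero[OF A B f] by force
    show "\<ominus>\<^bsub>B\<^esub> a \<in> f ` N" if "a \<in> f ` N" for a
      using that lin_neg[OF A B f] A.submoduleE(3)[OF N] sN by (smt (verit) image_iff subsetD)
    show "a \<oplus>\<^bsub>B\<^esub> b \<in> f ` N" if "a \<in> f ` N" "b \<in> f ` N" for a b
      using that fl A.submoduleE(5)[OF N] sN by (smt (verit) image_iff subsetD)
    show "a \<odot>\<^bsub>B\<^esub> x \<in> f ` N" if "a \<in> carrier R" "x \<in> f ` N" for a x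
      using that fl A.submoduleE(4)[OF N] sN by (smt (verit) image_iff subsetD)
  qed
qed

lemma pre_sub:
  assumes A: "Module.module R A" and B: "Module.module R B" and f: "module_linear R A B f"
    and N: "submodule N R B"
  shows "submodule {x \<in> carrier A. f x \<in> N} R A"
proof -
  interpret A: Module.module R A by fact
  interpret B: Module.module R B by fact
  note fl = f[unfolded module_linear_def]
  show ?thesis
  proof (rule A.submoduleI)
    show "{x \<in> carrier A. f x \<in> N} \<subseteq> carrier A" by blast
    show "\<zero>\<^bsub>A\<^esub> \<in> {x \<in> carrier A. f x \<in> N}" using sub_zero[OF B N] lin_zero[OF A B f] by force
    show "\<ominus>\<^bsub>A\<^esub> a \<in> {x \<in> carrier A. f x \<in> N}" if "a \<in> {x \<in> carrier A. f x \<in> N}" for a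
      using that lin_neg[OF A B f] B.submoduleE(3)[OF N] by simp
    show "a \<oplus>\<^bsub>A\<^esub> b \<in> {x \<in> carrier A. f x \<in> N}" if "a \<in> {x \<in> carrier A. f x \<in> N}" "b \<in> {x \<in> carrier A. f x \<in> N}" for a b
      using that fl B.submoduleE(5)[OF N] by simp
    show "a \<odot>\<^bsub>A\<^esub> x \<in> {x \<in> carrier A. f x \<in> N}" if "a \<in> carrier R" "x \<in> {x \<in> carrier A. f x \<in> N}" for a x
      using that fl B.submoduleE(4)[OF N] by simp
  qed
qed

lemma cancel:
  assumes A: "Module.module R A" and B: "Module.module R B" and C: "Module.module R C"
    and ses: "short_exact R A B C f g"
    and U: "submodule U R B" and V: "submodule V R B" and UV: "U \<subseteq> V"
    and h1: "{x \<in> carrier A. f x \<in> V} \<subseteq> {x \<in> carrier A. f x \<in> U}"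
    and h2: "g ` V \<subseteq> g ` U"
  shows "V \<subseteq> U"
proof
  interpret A: Module.module R A by fact
  interpret B: Module.module R B by fact
  interpret C: Module.module R C by fact
  have f: "module_linear R A B f" and g: "module_linear R B C g"
    and ker: "f ` carrier A = {y \<in> carrier B. g y = \<zero>\<^bsub>C\<^esub>}"
    using ses unfolding short_exact_def by auto
  note gl = g[unfolded module_linear_def]
  have sU: "U \<subseteq> carrier B" using B.submoduleE(1)[OF U] .
  have sV: "V \<subseteq> carrier B" using B.submoduleE(1)[OF V] .
  fix v assume v: "v \<in> V"
  have vc: "v \<in> carrier B" using v sV by blast
  obtain u where u: "u \<in> U" "g u = g v" using h2 v by (metis imageE imageI subsetD)
  have uc: "u \<in> carrier B" using u sU by blast
  define w where "w = v \<oplus>\<^bsub>B\<^esub> \<ominus>\<^bsub>B\<^esub> u"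
  have wV: "w \<in> V" unfolding w_def using B.submoduleE(3,5)[OF V] v u UV by blast
  have wc: "w \<in> carrier B" using wV sV by blast
  have "g w = g v \<oplus>\<^bsub>C\<^esub> \<ominus>\<^bsub>C\<^esub> g u"
    unfolding w_def using gl vc uc lin_neg[OF B C g uc] by simp
  also have "\<dots> = \<zero>\<^bsub>C\<^esub>" using u gl vc by (simp add: C.r_neg)
  finally have "w \<in> f ` carrier A" using ker wc by simp
  then obtain a where a: "a \<in> carrier A" "w = f a" by blast
  have "f a \<in> U" using h1 a wV by blast
  hence wU: "w \<in> U" using a by simp
  have "v = w \<oplus>\<^bsub>B\<^esub> u" unfolding w_def using vc uc
    by (simp add: B.a_assoc B.l_neg)
  then show "v \<in> U" using wU u B.submoduleE(5)[OF U] by simp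
qed

definition fchain :: "('r, 'c) ring_scheme \<Rightarrow> ('r, 'a) module \<Rightarrow> (nat \<Rightarrow> 'a set) \<Rightarrow> nat \<Rightarrow> bool" where
  "fchain R M F k \<longleftrightarrow> (\<forall>i\<le>k. submodule (F i) R M) \<and> (\<forall>i<k. F i \<subset> F (Suc i))"

lemma mod_length_fchain:
  fixes R :: "('r, 'c) ring_scheme" and M :: "('r, 'a) module"
  shows "mod_length R M = Sup (enat ` {k. \<exists>F. fchain R M F k})"
proof -
  have "(\<exists>C :: 'a set list. length C = Suc k \<and>
      (\<forall>i < Suc k. submodule (C ! i) R M) \<and> (\<forall>i < k. C ! i \<subset> C ! Suc i)) \<longleftrightarrow>
      (\<exists>F. fchain R M F k)" for k
  proof
    assume "\<exists>C :: 'a set list. length C = Suc k \<and>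
      (\<forall>i < Suc k. submodule (C ! i) R M) \<and> (\<forall>i < k. C ! i \<subset> C ! Suc i)"
    then obtain C :: "'a set list" where "(\<forall>i < Suc k. submodule (C ! i) R M) \<and> (\<forall>i < k. C ! i \<subset> C ! Suc i)"
      by blast
    then have "fchain R M (\<lambda>i. C ! i) k" unfolding fchain_def by auto
    then show "\<exists>F. fchain R M F k" by blast
  next
    assume "\<exists>F. fchain R M F k"
    then obtain F where F: "fchain R M F k" by blast
    show "\<exists>C :: 'a set list. length C = Suc k \<and>
      (\<forall>i < Suc k. submodule (C ! i) R M) \<and> (\<forall>i < k. C ! i \<subset> C ! Suc i)"
      apply (rule exI[of _ "map F [0..<Suc k]"])
      using F unfolding fchain_def by (auto simp del: upt_Suc simp: nth_map_upt less_Suc_eq_le)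
  qed
  then show ?thesis unfolding mod_length_def by (simp add: image_def, metis)
qed

lemma extend:
  assumes F: "fchain R M F p" and N: "submodule N R M" and FN: "F p \<subseteq> N"
  shows "\<exists>F' p'. fchain R M F' p' \<and> F' p' = N \<and> (F p = N \<longrightarrow> p' = p) \<and> (F p \<noteq> N \<longrightarrow> p' = Suc p)"
proof (cases "F p = N")
  case True then show ?thesis using F by blast
next
  case False
  have "fchain R M (F(Suc p := N)) (Suc p)"
    using F N FN False unfolding fchain_def
    by (auto simp: le_Suc_eq less_Suc_eq)
  then show ?thesis using False by force
qed

lemma combine:
  assumes A: "Module.module R A" and B: "Module.module R B" and C: "Module.module R C"
    and ses: "short_exact R A B C f g"
    and FA: "fchain R A FA p" and FC: "fchain R C FC q"
  shows "fchain R B (\<lambda>i. if i \<le> p then f ` (FA i) else {y \<in> carrier B. g y \<in> FC (i - p)}) (p + q)"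
proof -
  interpret A: Module.module R A by fact
  interpret B: Module.module R B by fact
  interpret C: Module.module R C by fact
  have f: "module_linear R A B f" and g: "module_linear R B C g"
    and inj: "inj_on f (carrier A)" and sur: "g ` carrier B = carrier C"
    and ker: "f ` carrier A = {y \<in> carrier B. g y = \<zero>\<^bsub>C\<^esub>}"
    using ses unfolding short_exact_def by auto
  have sA: "\<And>i. i \<le> p \<Longrightarrow> FA i \<subseteq> carrier A" using FA A.submoduleE(1) unfolding fchain_def by blast
  have sC: "\<And>i. i \<le> q \<Longrightarrow> FC i \<subseteq> carrier C" using FC C.submoduleE(1) unfolding fchain_def by blast
  have imgstrict: "f ` X \<subset> f ` Y" if "X \<subset> Y" "Y \<subseteq> carrier A" for X Y
  proof -
    have XY: "X \<subseteq> Y" "X \<subseteq> carrier A" "X \<noteq> Y" using that by auto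
    have "f ` X \<noteq> f ` Y" using inj_on_image_eq_iff[OF inj XY(2) that(2)] XY(3) by simp
    then show ?thesis using XY(1) by blast
  qed
  have prestrict: "{y \<in> carrier B. g y \<in> X} \<subset> {y \<in> carrier B. g y \<in> Y}" if h: "X \<subset> Y" "Y \<subseteq> carrier C" for X Y
  proof -
    obtain c where c: "c \<in> Y" "c \<notin> X" using h by blast
    then obtain b where "b \<in> carrier B" "g b = c" using sur h by (metis imageE subsetD)
    then show ?thesis using h c by blast
  qed
  show ?thesis unfolding fchain_def
  proof (intro conjI allI impI)
    fix i assume i: "i \<le> p + q"
    show "submodule (if i \<le> p then f ` FA i else {y \<in> carrier B. g y \<in> FC (i - p)}) R B"
    proof (cases "i \<le> p")
      case True then show ?thesis using img_sub[OF A B f] FA unfolding fchain_def by simp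
    next
      case False then show ?thesis using pre_sub[OF B C g] FC i unfolding fchain_def by simp
    qed
  next
    fix i assume i: "i < p + q"
    consider "Suc i \<le> p" | "i = p" | "p < i" by linarith
    then show "(if i \<le> p then f ` FA i else {y \<in> carrier B. g y \<in> FC (i - p)})
        \<subset> (if Suc i \<le> p then f ` FA (Suc i) else {y \<in> carrier B. g y \<in> FC (Suc i - p)})"
    proof cases
      case 1 then show ?thesis using imgstrict FA sA unfolding fchain_def by simp
    next
      case 2
      have q: "0 < q" using i 2 by simp
      have "f ` FA p \<subseteq> f ` carrier A" using sA by blast
      also have "\<dots> \<subseteq> {y \<in> carrier B. g y \<in> FC 0}" using ker sub_zero[OF C] FC unfolding fchain_def by auto
      also have "\<dots> \<subset> {y \<in> carrier B. g y \<in> FC 1}" using prestrict FC sC q unfolding fchain_def by simp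
      finally show ?thesis using 2 by simp
    next
      case 3
      have "Suc i - p = Suc (i - p)" using 3 by simp
      then show ?thesis using 3 i prestrict FC sC unfolding fchain_def by simp
    qed
  qed
qed

lemma split:
  assumes A: "Module.module R A" and B: "Module.module R B" and C: "Module.module R C"
    and ses: "short_exact R A B C f g"
  shows "fchain R B FB k \<Longrightarrow> \<exists>FA p FC q. fchain R A FA p \<and> fchain R C FC q \<and>
      FA p = {x \<in> carrier A. f x \<in> FB k} \<and> FC q = g ` FB k \<and> k \<le> p + q"
proof (induction k)
  have f: "module_linear R A B f" and g: "module_linear R B C g"
    using ses unfolding short_exact_def by auto
  case 0
  then have "submodule (FB 0) R B" unfolding fchain_def by simp
  then have "fchain R A (\<lambda>_. {x \<in> carrier A. f x \<in> FB 0}) 0" "fchain R C (\<lambda>_. g ` FB 0) 0"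
    using pre_sub[OF A B f] img_sub[OF B C g] unfolding fchain_def by auto
  then show ?case
    apply (intro exI[of _ "\<lambda>_. {x \<in> carrier A. f x \<in> FB 0}"] exI[of _ "0::nat"] exI[of _ "\<lambda>_. g ` FB 0"])
    by simp
next
  have f: "module_linear R A B f" and g: "module_linear R B C g"
    using ses unfolding short_exact_def by auto
  case (Suc k)
  have FBk: "fchain R B FB k" using Suc.prems unfolding fchain_def by simp
  from Suc.IH[OF FBk] obtain FA p FC q where ih: "fchain R A FA p" "fchain R C FC q"
      "FA p = {x \<in> carrier A. f x \<in> FB k}" "FC q = g ` FB k" "k \<le> p + q" by blast
  have Uk: "submodule (FB k) R B" and Vk: "submodule (FB (Suc k)) R B" and st: "FB k \<subset> FB (Suc k)"
    using Suc.prems unfolding fchain_def by simp_all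
  obtain FA' p' where a: "fchain R A FA' p'" "FA' p' = {x \<in> carrier A. f x \<in> FB (Suc k)}"
      "FA p = {x \<in> carrier A. f x \<in> FB (Suc k)} \<longrightarrow> p' = p" "FA p \<noteq> {x \<in> carrier A. f x \<in> FB (Suc k)} \<longrightarrow> p' = Suc p"
  proof -
    have "FA p \<subseteq> {x \<in> carrier A. f x \<in> FB (Suc k)}" using ih(3) st by blast
    from extend[OF ih(1) pre_sub[OF A B f Vk] this] show ?thesis by (elim exE conjE) (rule that; assumption)
  qed
  obtain FC' q' where c: "fchain R C FC' q'" "FC' q' = g ` FB (Suc k)"
      "FC q = g ` FB (Suc k) \<longrightarrow> q' = q" "FC q \<noteq> g ` FB (Suc k) \<longrightarrow> q' = Suc q"
  proof -
    have "FC q \<subseteq> g ` FB (Suc k)" using ih(4) st by blast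
    from extend[OF ih(2) img_sub[OF B C g Vk] this] show ?thesis by (elim exE conjE) (rule that; assumption)
  qed
  have "\<not> (FA p = {x \<in> carrier A. f x \<in> FB (Suc k)} \<and> FC q = g ` FB (Suc k))"
  proof
    assume "FA p = {x \<in> carrier A. f x \<in> FB (Suc k)} \<and> FC q = g ` FB (Suc k)"
    then have e1: "{x \<in> carrier A. f x \<in> FB (Suc k)} \<subseteq> {x \<in> carrier A. f x \<in> FB k}"
      and e2: "g ` FB (Suc k) \<subseteq> g ` FB k"
      using ih(3,4) by simp_all
    have "FB (Suc k) \<subseteq> FB k"
      using cancel[OF A B C ses Uk Vk _ e1 e2] st by blast
    then show False using st by blast
  qed
  then have "Suc k \<le> p' + q'" using a(3,4) c(3,4) ih(5) by force
  then show ?case using a(1,2) c(1,2) by (intro exI[of _ FA'] exI[of _ p'] exI[of _ FC'] exI[of _ q']) simp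
qed

definition Kset :: "('r, 'c) ring_scheme \<Rightarrow> ('r, 'a) module \<Rightarrow> nat set" where
  "Kset R M = {k. \<exists>F. fchain R M F k}"

lemma Kset_zero:
  assumes "Module.module R M" shows "0 \<in> Kset R M"
proof -
  interpret M: Module.module R M by fact
  have "fchain R M (\<lambda>_. carrier M) 0" unfolding fchain_def using M.carrier_is_submodule by simp
  then show ?thesis unfolding Kset_def by blast
qed

lemma fin_len:
  assumes "Sup (enat ` K) \<noteq> \<infinity>" "K \<noteq> {}"
  shows "finite K \<and> Sup (enat ` K) = enat (Max K)"
proof -
  have fi: "finite (enat ` K)" using assms unfolding Sup_enat_def by (auto split: if_splits)
  then have fK: "finite K" using finite_imageD inj_on_def by (metis enat.inject)
  have "Sup (enat ` K) = Max (enat ` K)" using fi assms(2) unfolding Sup_enat_def by simp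
  also have "\<dots> = enat (Max K)"
    by (rule mono_Max_commute[symmetric]) (auto simp: mono_def fK assms(2))
  finally show ?thesis using fK by simp
qed

lemma len_add:
  assumes A: "Module.module R A" and B: "Module.module R B" and C: "Module.module R C"
    and ses: "short_exact R A B C f g"
    and lB: "mod_length R B \<noteq> \<infinity>" and lC: "mod_length R C \<noteq> \<infinity>"
  shows "mod_length R A \<noteq> \<infinity> \<and>
    int (the_enat (mod_length R B)) = int (the_enat (mod_length R A)) + int (the_enat (mod_length R C))"
proof -
  have eA: "mod_length R A = Sup (enat ` Kset R A)" using mod_length_fchain unfolding Kset_def by blast
  have eB: "mod_length R B = Sup (enat ` Kset R B)" using mod_length_fchain unfolding Kset_def by blast
  have eC: "mod_length R C = Sup (enat ` Kset R C)" using mod_length_fchain unfolding Kset_def by blast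
  have n0: "Kset R A \<noteq> {}" "Kset R B \<noteq> {}" "Kset R C \<noteq> {}"
    using Kset_zero[OF A] Kset_zero[OF B] Kset_zero[OF C] by auto
  have comb: "p + q \<in> Kset R B" if "p \<in> Kset R A" "q \<in> Kset R C" for p q
    using that combine[OF A B C ses] unfolding Kset_def by blast
  have spl: "\<exists>p\<in>Kset R A. \<exists>q\<in>Kset R C. k \<le> p + q" if "k \<in> Kset R B" for k
    using that split[OF A B C ses] unfolding Kset_def by blast
  from fin_len[OF lB[unfolded eB] n0(2)] have fB: "finite (Kset R B)" and mB: "mod_length R B = enat (Max (Kset R B))"
    using eB by auto
  from fin_len[OF lC[unfolded eC] n0(3)] have fC: "finite (Kset R C)" and mC: "mod_length R C = enat (Max (Kset R C))"
    using eC by auto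
  have "Kset R A \<subseteq> Kset R B" using comb Kset_zero[OF C] by (metis add_0_right subsetI)
  then have fA: "finite (Kset R A)" using fB finite_subset by blast
  have mA: "mod_length R A = enat (Max (Kset R A))"
    unfolding eA using fA n0(1) by (simp add: Sup_enat_def mono_Max_commute[symmetric] mono_def)
  have inA: "Max (Kset R A) \<in> Kset R A" using fA n0(1) by simp
  have inB: "Max (Kset R B) \<in> Kset R B" using fB n0(2) by simp
  have inC: "Max (Kset R C) \<in> Kset R C" using fC n0(3) by simp
  have le1: "Max (Kset R A) + Max (Kset R C) \<le> Max (Kset R B)" using comb[OF inA inC] fB by simp
  obtain p q where pq: "p \<in> Kset R A" "q \<in> Kset R C" "Max (Kset R B) \<le> p + q" using spl[OF inB] by blast
  have "p \<le> Max (Kset R A)" "q \<le> Max (Kset R C)" using pq fA fC by auto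
  then have "Max (Kset R B) = Max (Kset R A) + Max (Kset R C)" using le1 pq(3) by linarith
  then show ?thesis using mA mB mC by simp
qed

lemma delta_local:
  "\<forall>m\<le>M. f m = g m \<Longrightarrow> n \<le> M - int s * (int d + 1) \<Longrightarrow> delta_neg d s f n = delta_neg d s g n"
proof (induction s arbitrary: n)
  case 0 then show ?case by simp
next
  case (Suc s)
  have "n + 1 \<le> M - int s * (int d + 1)" "n + int d + 1 \<le> M - int s * (int d + 1)"
    using Suc.prems(2) by (simp_all add: algebra_simps)
  then show ?case using Suc by simp
qed

lemma delta_neg_uminus: "delta_neg d s (\<lambda>n. - f n) = (\<lambda>n. - delta_neg d s f n)"
  by (induction s) auto

lemma delta_neg_comm: "delta_neg d s (delta_neg d (Suc 0) f) = delta_neg d (Suc s) f"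
proof (induction s)
  case 0 then show ?case by simp
next
  case (Suc s)
  have "delta_neg d (Suc s) (delta_neg d (Suc 0) f) =
     (\<lambda>n. delta_neg d s (delta_neg d (Suc 0) f) (n + 1) - delta_neg d s (delta_neg d (Suc 0) f) (n + int d + 1))"
    by (rule delta_neg.simps(2))
  also have "\<dots> = (\<lambda>n. delta_neg d (Suc s) f (n + 1) - delta_neg d (Suc s) f (n + int d + 1))"
    by (simp only: Suc)
  also have "\<dots> = delta_neg d (Suc (Suc s)) f" by (rule delta_neg.simps(2)[symmetric])
  finally show ?case .
qed

theorem lemma5p2:
  fixes d :: nat
    and R0 :: "('r, 'c) ring_scheme"
    and Hom :: "'o \<Rightarrow> 'o \<Rightarrow> ('r, 'm) module"
    and Sig :: "int \<Rightarrow> 'o \<Rightarrow> 'o"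
    and X Y Yz :: 'o
  assumes d_even: "even d" and d_ge: "d \<ge> 2"
    and R0_ring: "cring R0"
    and Hom_mod: "\<And>A B. Module.module R0 (Hom A B)"
    and fl: "\<And>n. lam R0 Hom Sig n X Y \<noteq> \<infinity>"
    and ses: "\<exists>N. \<forall>n\<le>N. \<exists>f g. short_exact R0
               (Hom X (Sig n Yz)) (Hom X (Sig (n + 1) Y)) (Hom X (Sig (n + int d + 1) Y)) f g"
  shows "(\<exists>N. \<forall>n\<le>N. hfun d R0 Hom Sig X Yz n
                 = hfun d R0 Hom Sig X Y (n + int d + 1) - hfun d R0 Hom Sig X Y (n + 1))
       \<and> (\<forall>s\<ge>1. \<exists>N. \<forall>n\<le>N. delta_neg d (s - 1) (hfun d R0 Hom Sig X Yz) n
                              = - delta_neg d s (hfun d R0 Hom Sig X Y) n)"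
proof -
  obtain N where N: "\<forall>n\<le>N. \<exists>f g. short_exact R0
               (Hom X (Sig n Yz)) (Hom X (Sig (n + 1) Y)) (Hom X (Sig (n + int d + 1) Y)) f g"
    using ses by blast
  define L where "L n = int (the_enat (lam R0 Hom Sig n X Y))" for n
  define Lz where "Lz n = int (the_enat (lam R0 Hom Sig n X Yz))" for n
  define sg :: "int \<Rightarrow> int" where "sg n = (if even n then 1 else -1)" for n
  have Lz: "Lz n = L (n + 1) - L (n + int d + 1)" if nN: "n \<le> N" for n
  proof -
    obtain f g where fg: "short_exact R0
               (Hom X (Sig n Yz)) (Hom X (Sig (n + 1) Y)) (Hom X (Sig (n + int d + 1) Y)) f g"
      using N nN by blast
    from len_add[OF Hom_mod Hom_mod Hom_mod fg] fl[of "n+1"] fl[of "n + int d + 1"]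
    show ?thesis unfolding L_def Lz_def lam_def by simp
  qed
  have hY: "hfun d R0 Hom Sig X Y n = (\<Sum>i<d. sg (n + int i) * L (n + int i))" for n
    unfolding hfun_def L_def sg_def by simp
  have hYz: "hfun d R0 Hom Sig X Yz n = (\<Sum>i<d. sg (n + int i) * Lz (n + int i))" for n
    unfolding hfun_def Lz_def sg_def by simp
  have sg1: "sg (m + 1) = - sg m" for m unfolding sg_def by simp
  have sgd: "sg (m + int d) = sg m" for m unfolding sg_def using d_even by simp
  define N1 where "N1 = N - int d"
  have part1: "hfun d R0 Hom Sig X Yz n
       = hfun d R0 Hom Sig X Y (n + int d + 1) - hfun d R0 Hom Sig X Y (n + 1)" if "n \<le> N1" for n
  proof -
    have "hfun d R0 Hom Sig X Yz n = (\<Sum>i<d. sg (n + int i) * (L (n + int i + 1) - L (n + int i + int d + 1)))"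
      unfolding hYz using that N1_def by (intro sum.cong refl) (simp add: Lz)
    also have "\<dots> = (\<Sum>i<d. sg (n + int d + 1 + int i) * L (n + int d + 1 + int i))
                   - (\<Sum>i<d. sg (n + 1 + int i) * L (n + 1 + int i))"
    proof -
      have a: "sg (n + int d + 1 + int i) = - sg (n + int i)" for i
        using sg1[of "n + int i + int d"] sgd[of "n + int i"] by (simp add: algebra_simps)
      have b: "sg (n + 1 + int i) = - sg (n + int i)" for i
        using sg1[of "n + int i"] by (simp add: algebra_simps)
      show ?thesis unfolding a b sum_subtractf[symmetric]
        by (intro sum.cong refl) (simp add: algebra_simps)
    qed
    finally show ?thesis unfolding hY .
  qed
  define H where "H = hfun d R0 Hom Sig X Y"
  define Hz where "Hz = hfun d R0 Hom Sig X Yz"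
  have HzD: "\<forall>m\<le>N1. Hz m = (\<lambda>m. - delta_neg d (Suc 0) H m) m"
    using part1 unfolding H_def Hz_def by simp
  have part2: "\<exists>N. \<forall>n\<le>N. delta_neg d (s - 1) Hz n = - delta_neg d s H n" if s: "s \<ge> 1" for s
  proof -
    obtain t where t: "s = Suc t" using s by (cases s) auto
    have "delta_neg d t Hz n = - delta_neg d s H n" if "n \<le> N1 - int t * (int d + 1)" for n
    proof -
      have "delta_neg d t Hz n = delta_neg d t (\<lambda>m. - delta_neg d (Suc 0) H m) n"
        by (rule delta_local[OF HzD that])
      also have "\<dots> = - delta_neg d s H n"
        unfolding delta_neg_uminus t delta_neg_comm ..
      finally show ?thesis .
    qed
    then show ?thesis using t by auto
  qed
  show ?thesis using part1 part2 unfolding H_def Hz_def by blast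
qed

end
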